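(* Let $\nu>0$, let $K$ be a smooth positive function, let $J(u)=\int K(u)\,du$ be an antiderivative of $K$, and let $A,B,D$ be constants with $D\neq 0$. (i) If $A\neq 0$ and $C(u)=D\,K(u)\left(AJ(u)+B\right)^{1/A}$ (on a range of $u$ where $AJ(u)+B>0$), then the equation $C(u)u_t=z^{-\nu}\left(K(u)z^{\nu}u_z\right)_z$ admits the Lie point symmetry generator $$Y_3=z\partial_z-2\,\frac{AJ(u)+B}{K(u)}\,\partial_u .$$ (ii) If $B\neq 0$ and $C(u)=D\,K(u)\exp\!\left(\frac{1}{B}J(u)\right)$, then the same equation admits the generator $Y_3=z\partial_z-\frac{2B}{K(u)}\partial_u$.
   Context: Here $u=u(z,t)$ with $z>0$, $t>0$. A vector field $Y=\xi\partial_z+\tau\partial_t+\eta\partial_u$ (coefficients depending on $z,t,u$) is an admitted Lie point symmetry generator of the equation if its second prolongation annihilates $C(u)u_t-K'(u)u_z^2-K(u)u_{zz}-\frac{\nu}{z}K(u)u_z$ on the solution manifold of the equation (equivalently, the one-parameter local group it generates maps solutions to solutions). *)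

theory Defs
  imports "HOL-Analysis.Analysis"
begin

definition pdz :: "(real \<Rightarrow> real \<Rightarrow> real \<Rightarrow> real) \<Rightarrow> real \<Rightarrow> real \<Rightarrow> real \<Rightarrow> real" where
  "pdz f z t u = deriv (\<lambda>s. f s t u) z"

definition pdt :: "(real \<Rightarrow> real \<Rightarrow> real \<Rightarrow> real) \<Rightarrow> real \<Rightarrow> real \<Rightarrow> real \<Rightarrow> real" where
  "pdt f z t u = deriv (\<lambda>s. f z s u) t"

definition pdu :: "(real \<Rightarrow> real \<Rightarrow> real \<Rightarrow> real) \<Rightarrow> real \<Rightarrow> real \<Rightarrow> real \<Rightarrow> real" where
  "pdu f z t u = deriv (\<lambda>s. f z t s) u"

text \<open>Prolongation coefficients (standard formulas, cf. Olver) of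
  Y = xi d_z + tau d_t + eta d_u, evaluated at the jet point
  (z, t, u, u_z, u_t, u_zz, u_zt).\<close>

definition phi_z where
  "phi_z xi tau eta z t u uz ut =
     pdz eta z t u + (pdu eta z t u - pdz xi z t u) * uz - pdz tau z t u * ut
     - pdu xi z t u * uz^2 - pdu tau z t u * uz * ut"

definition phi_t where
  "phi_t xi tau eta z t u uz ut =
     pdt eta z t u - pdt xi z t u * uz + (pdu eta z t u - pdt tau z t u) * ut
     - pdu xi z t u * uz * ut - pdu tau z t u * ut^2"

definition phi_zz where
  "phi_zz xi tau eta z t u uz ut uzz uzt =
     pdz (pdz eta) z t u
     + (2 * pdu (pdz eta) z t u - pdz (pdz xi) z t u) * uz
     - pdz (pdz tau) z t u * ut
     + (pdu (pdu eta) z t u - 2 * pdu (pdz xi) z t u) * uz^2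
     - 2 * pdu (pdz tau) z t u * uz * ut
     - pdu (pdu xi) z t u * uz^3
     - pdu (pdu tau) z t u * uz^2 * ut
     + (pdu eta z t u - 2 * pdz xi z t u) * uzz
     - 2 * pdz tau z t u * uzt
     - 3 * pdu xi z t u * uz * uzz
     - pdu tau z t u * ut * uzz
     - 2 * pdu tau z t u * uz * uzt"

text \<open>A second-order equation F(z,t,u,u_z,u_t,u_zz) = 0 and the action of the
  second prolongation of Y on F (F does not depend on u_zt, u_tt).\<close>

type_synonym jetfun = "real \<Rightarrow> real \<Rightarrow> real \<Rightarrow> real \<Rightarrow> real \<Rightarrow> real \<Rightarrow> real"

definition pr2 :: "jetfun \<Rightarrow> (real \<Rightarrow> real \<Rightarrow> real \<Rightarrow> real) \<Rightarrow> (real \<Rightarrow> real \<Rightarrow> real \<Rightarrow> real)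
    \<Rightarrow> (real \<Rightarrow> real \<Rightarrow> real \<Rightarrow> real) \<Rightarrow> real \<Rightarrow> real \<Rightarrow> real \<Rightarrow> real \<Rightarrow> real \<Rightarrow> real \<Rightarrow> real \<Rightarrow> real" where
  "pr2 F xi tau eta z t u uz ut uzz uzt =
     xi z t u * deriv (\<lambda>s. F s t u uz ut uzz) z
     + tau z t u * deriv (\<lambda>s. F z s u uz ut uzz) t
     + eta z t u * deriv (\<lambda>s. F z t s uz ut uzz) u
     + phi_z xi tau eta z t u uz ut * deriv (\<lambda>s. F z t u s ut uzz) uz
     + phi_t xi tau eta z t u uz ut * deriv (\<lambda>s. F z t u uz s uzz) ut
     + phi_zz xi tau eta z t u uz ut uzz uzt * deriv (\<lambda>s. F z t u uz ut s) uzz"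

definition admits_symmetry :: "jetfun \<Rightarrow> (real \<Rightarrow> real \<Rightarrow> real \<Rightarrow> bool)
    \<Rightarrow> (real \<Rightarrow> real \<Rightarrow> real \<Rightarrow> real) \<Rightarrow> (real \<Rightarrow> real \<Rightarrow> real \<Rightarrow> real)
    \<Rightarrow> (real \<Rightarrow> real \<Rightarrow> real \<Rightarrow> real) \<Rightarrow> bool" where
  "admits_symmetry F Dom xi tau eta \<longleftrightarrow>
     (\<forall>z t u uz ut uzz uzt. Dom z t u \<longrightarrow> F z t u uz ut uzz = 0 \<longrightarrow>
        pr2 F xi tau eta z t u uz ut uzz uzt = 0)"

text \<open>The equation C(u) u_t - K'(u) u_z^2 - K(u) u_zz - (nu/z) K(u) u_z = 0,
  i.e. C(u) u_t = z^(-nu) (K(u) z^nu u_z)_z.\<close>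

definition eqF :: "(real \<Rightarrow> real) \<Rightarrow> (real \<Rightarrow> real) \<Rightarrow> real \<Rightarrow> jetfun" where
  "eqF C K \<nu> z t u uz ut uzz =
     C u * ut - deriv K u * uz^2 - K u * uzz - \<nu> / z * K u * uz"

end

theory Submission imports Defs begin
lemma derivA:
  fixes K J :: "real \<Rightarrow> real" and A B D u :: real
  assumes k: "(K has_real_derivative k1) (at u)" and j: "(J has_real_derivative K u) (at u)"
  and h: "A * J u + B > 0" and A: "A \<noteq> 0" and kp: "K u > 0"
  shows "((\<lambda>u. D * K u * (A * J u + B) powr (1 / A)) has_real_derivative
             (D * K u * (A * J u + B) powr (1 / A)) * (k1 / K u + K u / (A * J u + B))) (at u)"
proof -
  have pp: "(A * J u + B) powr (1 / A - 1) = (A * J u + B) powr (1 / A) / (A * J u + B)"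
    using h by (simp add: powr_diff)
  have 1: "((\<lambda>u. D * K u * (A * J u + B) powr (1 / A)) has_real_derivative
     D * (k1 * (A * J u + B) powr (1 / A) + K u * ((1 / A) * (A * J u + B) powr (1 / A - 1) * (A * K u)))) (at u)"
    using k j h by (auto intro!: derivative_eq_intros simp: algebra_simps)
  have 2: "D * (k1 * (A * J u + B) powr (1 / A) + K u * ((1 / A) * (A * J u + B) powr (1 / A - 1) * (A * K u)))
     = (D * K u * (A * J u + B) powr (1 / A)) * (k1 / K u + K u / (A * J u + B))"
  proof -
    have g: "\<And>p q k. p > 0 \<Longrightarrow> k > 0 \<Longrightarrow> D * (k1 * q + k * ((1 / A) * (q / p) * (A * k))) = (D * k * q) * (k1 / k + k / p)"
      using A by (simp add: field_simps)
    show ?thesis unfolding pp using g[OF h kp] .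
  qed
  show ?thesis using 1 unfolding 2 .
qed
lemma derivB:
  fixes K J :: "real \<Rightarrow> real" and A B D u :: real
  assumes k: "(K has_real_derivative k1) (at u)" and j: "(J has_real_derivative K u) (at u)"
  and B: "B \<noteq> 0" and kp: "K u > 0"
  shows "((\<lambda>u. D * K u * exp (J u / B)) has_real_derivative
             (D * K u * exp (J u / B)) * (k1 / K u + K u / B)) (at u)"
    using k j B kp
    by (auto intro!: derivative_eq_intros simp: field_simps)

lemma alg:
  fixes k k1 kk p a c z \<nu> uz ut uzz :: real
  assumes k: "k > 0" and p: "p \<noteq> 0" and z: "z > 0"
  and F: "c * ut - k1 * uz^2 - k * uzz - \<nu> / z * k * uz = 0"
  shows "z * (\<nu> / z^2 * k * uz) + 0 * 0
   + (-2 * p / k) * (c * (k1 / k + k / p) * ut - kk * uz^2 - k1 * uzz - \<nu> / z * k1 * uz)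
   + (((-2 * a + 2 * p * k1 / k^2) - 1) * uz) * (-2 * k1 * uz - \<nu> / z * k)
   + ((-2 * a + 2 * p * k1 / k^2) * ut) * c
   + ((2 * (a * k * k1 + p * kk) / k^2 - 4 * p * k1^2 / k^3) * uz^2 + ((-2 * a + 2 * p * k1 / k^2) - 2) * uzz) * (- k) = 0"
proof -
  have u: "uzz = (c * ut - k1 * uz^2 - \<nu> / z * k * uz) / k" using F k by (simp add: field_simps)
  show ?thesis unfolding u using k p z by (simp add: field_simps power2_eq_square power3_eq_cube)
qed

lemma gen:
  fixes K P C :: "real \<Rightarrow> real" and a \<nu> :: real and Dom :: "real \<Rightarrow> real \<Rightarrow> real \<Rightarrow> bool"
  assumes K1: "\<forall>x. (K has_real_derivative deriv K x) (at x)"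
  and K2: "\<forall>x. (deriv K has_real_derivative deriv (deriv K) x) (at x)"
  and Kpos: "\<forall>u. K u > 0"
  and P: "\<forall>x. (P has_real_derivative a * K x) (at x)"
  and C: "\<forall>z t u. Dom z t u \<longrightarrow> z > 0 \<and> P u \<noteq> 0 \<and>
           (C has_real_derivative C u * (deriv K u / K u + K u / P u)) (at u)"
  shows "admits_symmetry (eqF C K \<nu>) Dom (\<lambda>z t u. z) (\<lambda>z t u. 0) (\<lambda>z t u. - 2 * P u / K u)"
proof -
  have Kn: "K x \<noteq> 0" for x using Kpos by (metis less_irrefl)
  have e1: "((\<lambda>u. - 2 * P u / K u) has_real_derivative (-2 * a + 2 * P x * deriv K x / (K x)^2)) (at x)" for x
    using K1 P Kn[of x]
    by (auto intro!: derivative_eq_intros simp: field_simps power2_eq_square)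
  have d1: "deriv (\<lambda>u. - 2 * P u / K u) = (\<lambda>x. -2 * a + 2 * P x * deriv K x / (K x)^2)"
    using e1 DERIV_imp_deriv by blast
  have e2: "((\<lambda>x. -2 * a + 2 * P x * deriv K x / (K x)^2) has_real_derivative
      (2 * (a * K x * deriv K x + P x * deriv (deriv K) x) / (K x)^2 - 4 * P x * (deriv K x)^2 / (K x)^3)) (at x)" for x
    using K1 K2 P Kn[of x]
    by (auto intro!: derivative_eq_intros simp: field_simps power2_eq_square power3_eq_cube)
  have d2: "deriv (deriv (\<lambda>u. - 2 * P u / K u)) u = 
      2 * (a * K u * deriv K u + P u * deriv (deriv K) u) / (K u)^2 - 4 * P u * (deriv K u)^2 / (K u)^3" for u
    unfolding d1 using e2 DERIV_imp_deriv by blast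
  show ?thesis unfolding admits_symmetry_def
  proof (intro allI impI)
    fix z t u uz ut uzz uzt
    assume D: "Dom z t u" and F: "eqF C K \<nu> z t u uz ut uzz = 0"
    from C D have z: "z > 0" and p: "P u \<noteq> 0" and Cd: "(C has_real_derivative C u * (deriv K u / K u + K u / P u)) (at u)" by auto
    have f1: "deriv (\<lambda>s. eqF C K \<nu> s t u uz ut uzz) z = \<nu> / z^2 * K u * uz"
      unfolding eqF_def using z
      by (intro DERIV_imp_deriv) (auto intro!: derivative_eq_intros simp: field_simps power2_eq_square)
    have f2: "deriv (\<lambda>s. eqF C K \<nu> z s u uz ut uzz) t = 0"
      unfolding eqF_def by simp
    have f3: "deriv (\<lambda>s. eqF C K \<nu> z t s uz ut uzz) u =
       C u * (deriv K u / K u + K u / P u) * ut - deriv (deriv K) u * uz^2 - deriv K u * uzz - \<nu> / z * deriv K u * uz"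
      unfolding eqF_def using Cd K1 K2 z
      by (intro DERIV_imp_deriv) (auto intro!: derivative_eq_intros)
    have f4: "deriv (\<lambda>s. eqF C K \<nu> z t u s ut uzz) uz = -2 * deriv K u * uz - \<nu> / z * K u"
      unfolding eqF_def using z
      by (intro DERIV_imp_deriv) (auto intro!: derivative_eq_intros)
    have f5: "deriv (\<lambda>s. eqF C K \<nu> z t u uz s uzz) ut = C u"
      unfolding eqF_def using z
      by (intro DERIV_imp_deriv) (auto intro!: derivative_eq_intros)
    have f6: "deriv (\<lambda>s. eqF C K \<nu> z t u uz ut s) uzz = - K u"
      unfolding eqF_def using z
      by (intro DERIV_imp_deriv) (auto intro!: derivative_eq_intros)
    have pz: "pdz (\<lambda>z t u. z) = (\<lambda>z t u. 1)" "pdu (\<lambda>z t u. z) = (\<lambda>z t u. 0)"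
       "pdt (\<lambda>z t u. z) = (\<lambda>z t u. 0)"
      by (auto simp: pdz_def pdu_def pdt_def fun_eq_iff)
    have p0: "\<And>c::real. pdz (\<lambda>z t u. c) = (\<lambda>z t u. 0)" "\<And>c::real. pdu (\<lambda>z t u. c) = (\<lambda>z t u. 0)"
       "\<And>c::real. pdt (\<lambda>z t u. c) = (\<lambda>z t u. 0)"
      by (auto simp: pdz_def pdu_def pdt_def fun_eq_iff)
    have pe: "pdz (\<lambda>z t u. - 2 * P u / K u) = (\<lambda>z t u. 0)" "pdt (\<lambda>z t u. - 2 * P u / K u) = (\<lambda>z t u. 0)"
      by (auto simp: pdz_def pdt_def fun_eq_iff)
    have pu: "pdu (\<lambda>z t u. - 2 * P u / K u) z t u = -2 * a + 2 * P u * deriv K u / (K u)^2"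
      unfolding pdu_def d1 by (rule refl)
    have puu: "pdu (pdu (\<lambda>z t u. - 2 * P u / K u)) z t u = 
      2 * (a * K u * deriv K u + P u * deriv (deriv K) u) / (K u)^2 - 4 * P u * (deriv K u)^2 / (K u)^3"
      using d2[of u] unfolding pdu_def d1 .
    have FF: "C u * ut - deriv K u * uz^2 - K u * uzz - \<nu> / z * K u * uz = 0" using F by (simp add: eqF_def)
    show "pr2 (eqF C K \<nu>) (\<lambda>z t u. z) (\<lambda>z t u. 0) (\<lambda>z t u. - 2 * P u / K u) z t u uz ut uzz uzt = 0"
      unfolding pr2_def f1 f2 f3 f4 f5 f6 phi_z_def phi_t_def phi_zz_def pz p0 pe pu puu
      using alg[OF Kpos[rule_format, of u] p z FF, where a=a and kk="deriv (deriv K) u"] by simp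
  qed
qed
theorem mainTheorem2:
  fixes \<nu> A B D :: real and K J :: "real \<Rightarrow> real"
  assumes nu_pos: "\<nu> > 0"
    and K_smooth: "\<forall>n x. ((deriv ^^ n) K) differentiable (at x)"
    and K_pos: "\<forall>u. K u > 0"
    and J_antideriv: "\<forall>u. (J has_real_derivative K u) (at u)"
    and D_nz: "D \<noteq> 0"
  shows "(A \<noteq> 0 \<longrightarrow>
           admits_symmetry (eqF (\<lambda>u. D * K u * (A * J u + B) powr (1 / A)) K \<nu>)
             (\<lambda>z t u. z > 0 \<and> t > 0 \<and> A * J u + B > 0)
             (\<lambda>z t u. z) (\<lambda>z t u. 0) (\<lambda>z t u. - 2 * (A * J u + B) / K u))
       \<and> (B \<noteq> 0 \<longrightarrow>
           admits_symmetry (eqF (\<lambda>u. D * K u * exp (J u / B)) K \<nu>)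
             (\<lambda>z t u. z > 0 \<and> t > 0)
             (\<lambda>z t u. z) (\<lambda>z t u. 0) (\<lambda>z t u. - 2 * B / K u))"
proof -
  have K1: "\<forall>x. (K has_real_derivative deriv K x) (at x)"
    using K_smooth DERIV_deriv_iff_real_differentiable
    by (metis funpow_0)
  have K2: "\<forall>x. (deriv K has_real_derivative deriv (deriv K) x) (at x)"
    using K_smooth[rule_format, of 1] by (simp add: DERIV_deriv_iff_real_differentiable)
  have Kn: "K x \<noteq> 0" for x using K_pos by (metis less_irrefl)
  show ?thesis
  proof (intro conjI impI)
    assume A: "A \<noteq> 0"
    have P: "\<forall>x. ((\<lambda>u. A * J u + B) has_real_derivative A * K x) (at x)"
      using J_antideriv by (auto intro!: derivative_eq_intros)
    have C: "\<forall>z t u. (z > 0 \<and> t > 0 \<and> A * J u + B > 0) \<longrightarrow> z > 0 \<and> A * J u + B \<noteq> 0 \<and>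
           ((\<lambda>u. D * K u * (A * J u + B) powr (1 / A)) has_real_derivative
             (D * K u * (A * J u + B) powr (1 / A)) * (deriv K u / K u + K u / (A * J u + B))) (at u)"
    proof (intro allI impI conjI)
      fix z t u assume h: "z > 0 \<and> t > 0 \<and> A * J u + B > 0"
      then show "z > 0" "A * J u + B \<noteq> 0" by auto
      have pp: "(A * J u + B) powr (1 / A - 1) = (A * J u + B) powr (1 / A) / (A * J u + B)"
        using h by (simp add: powr_diff)
      show "((\<lambda>u. D * K u * (A * J u + B) powr (1 / A)) has_real_derivative
             (D * K u * (A * J u + B) powr (1 / A)) * (deriv K u / K u + K u / (A * J u + B))) (at u)"
        using derivA[of K "deriv K u" u J A B D] K1 J_antideriv h A K_pos by blast
    qed
    show "admits_symmetry (eqF (\<lambda>u. D * K u * (A * J u + B) powr (1 / A)) K \<nu>)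
             (\<lambda>z t u. z > 0 \<and> t > 0 \<and> A * J u + B > 0)
             (\<lambda>z t u. z) (\<lambda>z t u. 0) (\<lambda>z t u. - 2 * (A * J u + B) / K u)"
      using gen[OF K1 K2 K_pos P C] by simp
  next
    assume B: "B \<noteq> 0"
    have P: "\<forall>x. ((\<lambda>u. B) has_real_derivative 0 * K x) (at x)"
      by (auto intro!: derivative_eq_intros)
    have C: "\<forall>z t u. (z > 0 \<and> t > 0) \<longrightarrow> z > 0 \<and> B \<noteq> 0 \<and>
           ((\<lambda>u. D * K u * exp (J u / B)) has_real_derivative
             (D * K u * exp (J u / B)) * (deriv K u / K u + K u / B)) (at u)"
      using derivB[of K "deriv K _" _ J B D] K1 J_antideriv B K_pos by blast
    show "admits_symmetry (eqF (\<lambda>u. D * K u * exp (J u / B)) K \<nu>)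
             (\<lambda>z t u. z > 0 \<and> t > 0)
             (\<lambda>z t u. z) (\<lambda>z t u. 0) (\<lambda>z t u. - 2 * B / K u)"
      using gen[OF K1 K2 K_pos P C] by simp
  qed
qed

end
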